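(* Let $p/q$ be an even rational parameter, $\omega=p+q$, and let $B$ be any block. For each even integer $k\in[0,\omega]$ there are exactly $2$ lines of $\mathcal H$ and exactly $2$ lines of $\mathcal V$ which have capacity $k$ and intersect $B$. Each such line $L$ carries exactly $k$ light points in $B$ (i.e. the light count of $L\cap B$ equals $k$).
   Context: An even rational parameter is a rational $p/q\in(0,1)$, $p,q$ positive coprime integers, with $pq$ even. Put $\omega=p+q$, $P=2p/\omega$, $Q=2q/\omega$. Families of lines: $\mathcal H$ = lines $y=n$, $\mathcal V$ = lines $x=n$ ($n\in\mathbb Z$), $\mathcal P$ = lines of slope $-P$ with integer $y$-intercept, $\mathcal Q$ = lines of slope $-Q$ with integer $y$-intercept. Functions mod $2\mathbb Z$, values represented in $(-1,1]$: $F_H(x,y)=2Py$, $F_V(x,y)=2Px$, $F_P(x,y)=Py+P^2x+1$, $F_Q(x,y)=Py+PQx+1$. The capacity of a line $L\in\mathcal H$ (resp. $\mathcal V$) is $|\omega F_H(L)|$ (resp. $|\omega F_V(L)|$), these functions being constant on such lines. A unit segment is an edge of a unit square of the integer grid; horizontal ones lie on lines of $\mathcal H$ (set $A=H$), vertical ones on lines of $\mathcal V$ (set $A=V$). A point $z$ of a unit segment $s$ is a light point of $s$ if for some $B\in\{P,Q\}$, $z$ lies on a line of $\mathcal B$ and $F_A(z)F_B(z)>0$, $|F_B(z)|<|F_A(z)|$. For a line $L\in\mathcal H\cup\mathcal V$ and a set $B$, the light count of $L\cap B$ is the number of distinct points of $L\cap B$ that are light points of some unit segment contained in $L$, where a light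 point that is the midpoint of a horizontal unit segment is counted twice. Blocks: let $\Lambda$ be the lattice in $\mathbb Z^2$ generated by $(\omega^2,0)$ and $(0,\omega)$; a block is a square $[0,\omega]^2+\ell$ with $\ell\in\Lambda$. *)

theory Defs
  imports Complex_Main
begin

definition even_rat_param :: "nat \<Rightarrow> nat \<Rightarrow> bool" where
  "even_rat_param p q \<longleftrightarrow> 0 < p \<and> p < q \<and> coprime p q \<and> even (p * q)"

definition omega :: "nat \<Rightarrow> nat \<Rightarrow> nat" where
  "omega p q = p + q"

definition bigP :: "nat \<Rightarrow> nat \<Rightarrow> real" where
  "bigP p q = 2 * real p / real (omega p q)"

definition bigQ :: "nat \<Rightarrow> nat \<Rightarrow> real" where
  "bigQ p q = 2 * real q / real (omega p q)"

text \<open>Representative of t mod 2Z in the interval (-1,1].\<close>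
definition rep2 :: "real \<Rightarrow> real" where
  "rep2 t = t - 2 * of_int \<lceil>(t - 1) / 2\<rceil>"

definition F_H :: "nat \<Rightarrow> nat \<Rightarrow> real \<times> real \<Rightarrow> real" where
  "F_H p q z = rep2 (2 * bigP p q * snd z)"

definition F_V :: "nat \<Rightarrow> nat \<Rightarrow> real \<times> real \<Rightarrow> real" where
  "F_V p q z = rep2 (2 * bigP p q * fst z)"

definition F_P :: "nat \<Rightarrow> nat \<Rightarrow> real \<times> real \<Rightarrow> real" where
  "F_P p q z = rep2 (bigP p q * snd z + (bigP p q)\<^sup>2 * fst z + 1)"

definition F_Q :: "nat \<Rightarrow> nat \<Rightarrow> real \<times> real \<Rightarrow> real" where
  "F_Q p q z = rep2 (bigP p q * snd z + bigP p q * bigQ p q * fst z + 1)"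

definition Hlines :: "(real \<times> real) set set" where
  "Hlines = {{z. snd z = of_int n} | n. True}"

definition Vlines :: "(real \<times> real) set set" where
  "Vlines = {{z. fst z = of_int n} | n. True}"

definition Plines :: "nat \<Rightarrow> nat \<Rightarrow> (real \<times> real) set set" where
  "Plines p q = {{z. snd z = - bigP p q * fst z + of_int c} | c. True}"

definition Qlines :: "nat \<Rightarrow> nat \<Rightarrow> (real \<times> real) set set" where
  "Qlines p q = {{z. snd z = - bigQ p q * fst z + of_int c} | c. True}"

text \<open>Capacity of a line of H (resp. V): |omega F_H| (resp. |omega F_V|), evaluated
  at a point of the line (these functions are constant on such lines).\<close>
definition capacity :: "nat \<Rightarrow> nat \<Rightarrow> (real \<times> real) set \<Rightarrow> real" where
  "capacity p q L =
     (if L \<in> Hlines then \<bar>real (omega p q) * F_H p q (SOME z. z \<in> L)\<bar>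
      else \<bar>real (omega p q) * F_V p q (SOME z. z \<in> L)\<bar>)"

definition hseg :: "(real \<times> real) set \<Rightarrow> bool" where
  "hseg s \<longleftrightarrow> (\<exists>m n::int. s = {(x, of_int n) | x. of_int m \<le> x \<and> x \<le> of_int m + 1})"

definition vseg :: "(real \<times> real) set \<Rightarrow> bool" where
  "vseg s \<longleftrightarrow> (\<exists>m n::int. s = {(of_int m, y) | y. of_int n \<le> y \<and> y \<le> of_int n + 1})"

definition light_wrt ::
  "nat \<Rightarrow> nat \<Rightarrow> (real \<times> real \<Rightarrow> real) \<Rightarrow> real \<times> real \<Rightarrow> bool" where
  "light_wrt p q FA z \<longleftrightarrow>
     (z \<in> \<Union>(Plines p q) \<and> FA z * F_P p q z > 0 \<and> \<bar>F_P p q z\<bar> < \<bar>FA z\<bar>) \<or>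
     (z \<in> \<Union>(Qlines p q) \<and> FA z * F_Q p q z > 0 \<and> \<bar>F_Q p q z\<bar> < \<bar>FA z\<bar>)"

definition light_point ::
  "nat \<Rightarrow> nat \<Rightarrow> (real \<times> real) set \<Rightarrow> real \<times> real \<Rightarrow> bool" where
  "light_point p q s z \<longleftrightarrow> z \<in> s \<and>
     ((hseg s \<and> light_wrt p q (F_H p q) z) \<or> (vseg s \<and> light_wrt p q (F_V p q) z))"

definition hmidpoint :: "real \<times> real \<Rightarrow> bool" where
  "hmidpoint z \<longleftrightarrow> (\<exists>m n::int. z = (of_int m + 1/2, of_int n))"

definition light_count ::
  "nat \<Rightarrow> nat \<Rightarrow> (real \<times> real) set \<Rightarrow> (real \<times> real) set \<Rightarrow> nat" where
  "light_count p q L S =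
     (let X = {z \<in> L \<inter> S. \<exists>s. (hseg s \<or> vseg s) \<and> s \<subseteq> L \<and> light_point p q s z}
      in card X + card {z \<in> X. hmidpoint z})"

definition blocks :: "nat \<Rightarrow> nat \<Rightarrow> (real \<times> real) set set" where
  "blocks p q = {{(x, y). real_of_int (i * int (omega p q)^2) \<le> x \<and>
                         x \<le> real_of_int (i * int (omega p q)^2) + real (omega p q) \<and>
                         real_of_int (j * int (omega p q)) \<le> y \<and>
                         y \<le> real_of_int (j * int (omega p q)) + real (omega p q)}
                 | i j :: int. True}"

end

theory Submission imports Defs begin

lemma rep2_unique:
  assumes "-1 < v" "v \<le> 1" "t - v = 2 * of_int m"
  shows "rep2 t = v"
proof -
  have h1: "(t - 1) / 2 = of_int m + (v - 1)/2" using assms by (simp add: field_simps)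
  have h2: "\<lceil>of_int m + (v - 1)/2\<rceil> = m"
    using assms by (intro ceiling_unique) auto
  show ?thesis unfolding rep2_def h1 h2 using assms by simp
qed

definition RR :: "int \<Rightarrow> int \<Rightarrow> int" where
  "RR w a = (a + w - 1) mod (2*w) - w + 1"

lemma RR_bounds: "w > 0 \<Longrightarrow> -w < RR w a \<and> RR w a \<le> w"
proof -
  assume w: "w > 0"
  have "0 \<le> (a + w - 1) mod (2*w)" "(a + w - 1) mod (2*w) < 2*w" using w by auto
  then show ?thesis unfolding RR_def by linarith
qed

lemma RR_dvd: "(2*w) dvd (a - RR w a)"
proof -
  have "a - RR w a = (a+w-1) - (a+w-1) mod (2*w)" by (simp add: RR_def)
  then show ?thesis by (simp add: minus_mod_eq_mult_div)
qed

lemma RR_cong: "(2*w) dvd (a - b) \<Longrightarrow> RR w a = RR w b"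
proof -
  assume "(2*w) dvd (a - b)"
  then have "(a + w - 1) mod (2*w) = (b + w - 1) mod (2*w)" by (simp add: mod_eq_dvd_iff)
  then show ?thesis by (simp add: RR_def)
qed

lemma rep2_RR:
  assumes "w > 0"
  shows "rep2 (of_int a / of_int w) = of_int (RR w a) / of_int w"
proof -
  obtain m where m: "a - RR w a = 2*w*m" using RR_dvd by blast
  have "real_of_int a / of_int w - of_int (RR w a) / of_int w = 2 * of_int m"
  proof -
    have "real_of_int a - of_int (RR w a) = 2 * of_int w * of_int m"
      using arg_cong[OF m, of real_of_int] by simp
    then show ?thesis using assms by (simp add: field_simps)
  qed
  moreover have "-1 < real_of_int (RR w a) / of_int w" "real_of_int (RR w a) / of_int w \<le> 1"
    using RR_bounds[OF assms, of a] assms by (simp_all add: field_simps)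
  ultimately show ?thesis by (intro rep2_unique) auto
qed

lemma RR_eq_dvd: "RR w x = RR w y \<Longrightarrow> (2*w) dvd (x - y)"
proof -
  assume h: "RR w x = RR w y"
  have "(2*w) dvd ((x - RR w x) - (y - RR w y))" using RR_dvd by (rule dvd_diff) (rule RR_dvd)
  then show ?thesis using h by simp
qed

lemma RR_even: "even (RR w a - a)"
proof -
  have "(2*w) dvd (a - RR w a)" by (rule RR_dvd)
  then have "2 dvd (a - RR w a)" by (rule dvd_mult_left)
  then show ?thesis by (simp add: dvd_diff_commute)
qed

definition Tset :: "int \<Rightarrow> int \<Rightarrow> int set" where
  "Tset w b = {v. -w < v \<and> v \<le> w \<and> even (v - b)}"

lemma Tset_sub:
  assumes "odd w" "w > 0"
  shows "Tset w b \<subseteq> (\<lambda>j. 2*j - w + 1 + b mod 2) ` {0..<w}"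
proof
  fix v assume "v \<in> Tset w b"
  then have v: "-w < v" "v \<le> w" "even (v - b)" by (auto simp: Tset_def)
  define j where "j = (v + w - 1 - b mod 2) div 2"
  have "j \<in> {0..<w} \<and> v = 2*j - w + 1 + b mod 2" using v assms unfolding j_def atLeastLessThan_iff by presburger
  then show "v \<in> (\<lambda>j. 2*j - w + 1 + b mod 2) ` {0..<w}" by blast
qed

lemma Tset_card_le:
  assumes "odd w" "w > 0"
  shows "card (Tset w b) \<le> nat w"
proof -
  have "card (Tset w b) \<le> card ((\<lambda>j. 2*j - w + 1 + b mod 2) ` {0..<w})"
    using Tset_sub[OF assms] by (intro card_mono) auto
  also have "\<dots> \<le> card {0..<w}" by (rule card_image_le) simp
  finally show ?thesis by simp
qed

lemma finite_Tset: "finite (Tset w b)"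
proof -
  have "Tset w b \<subseteq> {-w..w}" by (auto simp: Tset_def)
  then show ?thesis by (rule finite_subset) simp
qed

lemma RR_inj:
  assumes "w > 0" "coprime a w" "t \<in> {c..<c+w}" "t' \<in> {c..<c+w}"
    "RR w (b+2*a*t) = RR w (b+2*a*t')"
  shows "t = t'"
proof -
  have "(2*w) dvd ((b+2*a*t) - (b+2*a*t'))" using RR_eq_dvd[OF assms(5)] .
  then have "(2*w) dvd (2*(a*(t-t')))" by (simp add: algebra_simps)
  then have "w dvd (a*(t-t'))" by simp
  then have d: "w dvd (t - t')" using assms(2) by (metis coprime_commute coprime_dvd_mult_right_iff)
  show ?thesis
  proof (rule ccontr)
    assume "t \<noteq> t'"
    then have "\<bar>w\<bar> \<le> \<bar>t - t'\<bar>" using d by (intro dvd_imp_le_int) auto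
    then show False using assms(3,4) assms(1) by auto
  qed
qed

lemma period_bij:
  assumes "w > 0" "odd w" "coprime a w"
  shows "bij_betw (\<lambda>t. RR w (b+2*a*t)) {c..<c+w} (Tset w b)"
proof -
  let ?f = "\<lambda>t. RR w (b+2*a*t)"
  have inj: "inj_on ?f {c..<c+w}" using RR_inj[OF assms(1,3)] by (auto simp: inj_on_def)
  have sub: "?f ` {c..<c+w} \<subseteq> Tset w b"
  proof
    fix v assume "v \<in> ?f ` {c..<c+w}"
    then obtain t where v: "v = ?f t" by blast
    have "even (v - (b + 2*a*t))" using RR_even v by simp
    then have "even (v - b)" by (metis dvd_add_left_iff dvd_triv_left diff_diff_eq diff_add_cancel mult.assoc)
    then show "v \<in> Tset w b" using RR_bounds[OF assms(1)] v by (auto simp: Tset_def)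
  qed
  have "card (?f ` {c..<c+w}) = nat w" using card_image[OF inj] by simp
  then have "?f ` {c..<c+w} = Tset w b"
    using sub Tset_card_le[OF assms(2,1)] finite_Tset by (intro card_seteq) auto
  then show ?thesis using inj by (simp add: bij_betw_def)
qed

lemma period_count:
  assumes "w > 0" "odd w" "coprime a w"
  shows "card {t\<in>{c..<c+w}. P (RR w (b+2*a*t))} = card {v \<in> Tset w b. P v}"
proof -
  let ?f = "\<lambda>t. RR w (b+2*a*t)"
  have b: "bij_betw ?f {c..<c+w} (Tset w b)" by (rule period_bij[OF assms])
  have inj: "inj_on ?f {t\<in>{c..<c+w}. P (?f t)}"
    using b by (auto simp: bij_betw_def intro: inj_on_subset)
  have e: "Tset w b = ?f ` {c..<c+w}" using b by (simp add: bij_betw_def)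
  have "?f ` {t\<in>{c..<c+w}. P (?f t)} = {v \<in> ?f ` {c..<c+w}. P v}" by blast
  then have "?f ` {t\<in>{c..<c+w}. P (?f t)} = {v \<in> Tset w b. P v}" using e by simp
  then show ?thesis using card_image[OF inj] by simp
qed

lemma light_card:
  assumes "odd b" "even h" "\<bar>h\<bar> \<le> w"
  shows "card {v \<in> Tset w b. v*h > 0 \<and> \<bar>v\<bar> < \<bar>h\<bar>} = nat \<bar>h\<bar> div 2"
proof (cases "h > 0")
  case True
  have "{v \<in> Tset w b. v*h > 0 \<and> \<bar>v\<bar> < \<bar>h\<bar>} = (\<lambda>j. 2*j+1) ` {0..<h div 2}"
  proof (intro set_eqI iffI)
    fix v assume "v \<in> {v \<in> Tset w b. v*h > 0 \<and> \<bar>v\<bar> < \<bar>h\<bar>}"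
    then have v: "v > 0" "v < h" "even (v - b)" using True by (auto simp: Tset_def zero_less_mult_iff)
    then have "v div 2 \<in> {0..<h div 2} \<and> v = 2*(v div 2) + 1" using assms unfolding atLeastLessThan_iff by presburger
    then show "v \<in> (\<lambda>j. 2*j+1) ` {0..<h div 2}" by blast
  next
    fix v assume "v \<in> (\<lambda>j. 2*j+1) ` {0..<h div 2}"
    then obtain j where j: "j \<in> {0..<h div 2}" "v = 2*j+1" by blast
    then have "v > 0 \<and> v < h \<and> even (v - b)" using assms True unfolding atLeastLessThan_iff by presburger
    then show "v \<in> {v \<in> Tset w b. v*h > 0 \<and> \<bar>v\<bar> < \<bar>h\<bar>}" using assms True
      by (auto simp: Tset_def)
  qed
  moreover have "card ((\<lambda>j::int. 2*j+1) ` {0..<h div 2}) = nat (h div 2)"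
    by (subst card_image) (auto simp: inj_on_def)
  moreover have "nat (h div 2) = nat \<bar>h\<bar> div 2" using True by (simp add: nat_div_distrib)
  ultimately show ?thesis by simp
next
  case False
  show ?thesis
  proof (cases "h = 0")
    case True then show ?thesis by simp
  next
    case F2: False
    with False have hn: "h < 0" by simp
    have "{v \<in> Tset w b. v*h > 0 \<and> \<bar>v\<bar> < \<bar>h\<bar>} = (\<lambda>j. -2*j-1) ` {0..<(-h) div 2}"
    proof (intro set_eqI iffI)
      fix v assume "v \<in> {v \<in> Tset w b. v*h > 0 \<and> \<bar>v\<bar> < \<bar>h\<bar>}"
      then have v: "v < 0" "-v < -h" "even (v - b)" using hn by (auto simp: Tset_def zero_less_mult_iff)
      then have "(-v) div 2 \<in> {0..<(-h) div 2} \<and> v = -2*((-v) div 2) - 1" using assms unfolding atLeastLessThan_iff by presburger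
      then show "v \<in> (\<lambda>j. -2*j-1) ` {0..<(-h) div 2}" by blast
    next
      fix v assume "v \<in> (\<lambda>j. -2*j-1) ` {0..<(-h) div 2}"
      then obtain j where j: "j \<in> {0..<(-h) div 2}" "v = -2*j-1" by blast
      then have "v < 0 \<and> -v < -h \<and> even (v - b)" using assms hn unfolding atLeastLessThan_iff by presburger
      then show "v \<in> {v \<in> Tset w b. v*h > 0 \<and> \<bar>v\<bar> < \<bar>h\<bar>}" using assms hn
        by (auto simp: Tset_def mult_neg_neg)
    qed
    moreover have "card ((\<lambda>j::int. -2*j-1) ` {0..<(-h) div 2}) = nat ((-h) div 2)"
      by (subst card_image) (auto simp: inj_on_def)
    moreover have "nat ((-h) div 2) = nat \<bar>h\<bar> div 2" using hn by (simp add: nat_div_distrib)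
    ultimately show ?thesis by simp
  qed
qed

lemma cap_card:
  assumes "even k" "0 \<le> k" "k < w"
  shows "card {v \<in> Tset w 0. \<bar>v\<bar> = k} = (if k = 0 then 1 else 2)"
proof (cases "k = 0")
  case True
  then have "{v \<in> Tset w 0. \<bar>v\<bar> = k} = {0}" using assms by (auto simp: Tset_def)
  then show ?thesis using True by simp
next
  case False
  then have "{v \<in> Tset w 0. \<bar>v\<bar> = k} = {k, -k}" using assms by (auto simp: Tset_def)
  then show ?thesis using False assms by simp
qed


lemma hline_param:
  fixes a w X0 n i :: int
  assumes a: "a > 0" and w: "w > 0" and X0: "X0 = i*w^2"
  shows "{z. snd z = (of_int n::real) \<and> of_int X0 \<le> fst z \<and> fst z \<le> of_int X0 + of_int w \<and>
            (\<exists>c. snd z = - (2*of_int a/of_int w) * fst z + of_int c \<and> \<Phi> c)}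
       = (\<lambda>t. (of_int X0 + of_int t * of_int w/(2*of_int a), of_int n)) ` {t\<in>{0..2*a}. \<Phi> (n + 2*a*i*w + t)}"
proof (intro set_eqI iffI)
  fix z :: "real \<times> real"
  assume "z \<in> {z. snd z = of_int n \<and> of_int X0 \<le> fst z \<and> fst z \<le> of_int X0 + of_int w \<and>
            (\<exists>c. snd z = - (2*of_int a/of_int w) * fst z + of_int c \<and> \<Phi> c)}"
  then obtain x c where z: "z = (x, of_int n)" and b1: "of_int X0 \<le> x" and b2: "x \<le> of_int X0 + of_int w"
    and l: "of_int n = - (2*of_int a/of_int w) * x + of_int c" and ph: "\<Phi> c"
    by (cases z) auto
  define t where "t = c - n - 2*a*i*w"
  have wr: "real_of_int w > 0" using w by simp
  have ar: "real_of_int a > 0" using a by simp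
  have "x = (of_int c - of_int n) * of_int w / (2 * of_int a)"
    using l wr ar by (simp add: field_simps)
  also have "\<dots> = of_int X0 + of_int t * of_int w/(2*of_int a)"
    using wr ar unfolding t_def X0 by (simp add: field_simps power2_eq_square)
  finally have x: "x = of_int X0 + of_int t * of_int w/(2*of_int a)" .
  have "(0::real) \<le> of_int t * of_int w/(2*of_int a)" using x b1 by simp
  then have "0 \<le> real_of_int t" using wr ar by (simp add: zero_le_divide_iff zero_le_mult_iff)
  then have t0: "0 \<le> t" by simp
  have "of_int t * of_int w/(2*of_int a) \<le> real_of_int w" using x b2 by simp
  then have "of_int t * of_int w \<le> real_of_int w * (2 * of_int a)" using ar by (simp add: divide_le_eq)
  then have "real_of_int t \<le> 2 * of_int a" using wr by (simp add: mult.commute)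
  then have t1: "t \<le> 2*a" by linarith
  have "c = n + 2*a*i*w + t" unfolding t_def by simp
  then show "z \<in> (\<lambda>t. (of_int X0 + of_int t * of_int w/(2*of_int a), of_int n)) ` {t\<in>{0..2*a}. \<Phi> (n + 2*a*i*w + t)}"
    using z x t0 t1 ph by auto
next
  fix z :: "real \<times> real"
  assume "z \<in> (\<lambda>t. (of_int X0 + of_int t * of_int w/(2*of_int a), of_int n)) ` {t\<in>{0..2*a}. \<Phi> (n + 2*a*i*w + t)}"
  then obtain t where z: "z = (of_int X0 + of_int t * of_int w/(2*of_int a), of_int n)"
    and t: "0 \<le> t" "t \<le> 2*a" and ph: "\<Phi> (n + 2*a*i*w + t)" by auto
  have wr: "real_of_int w > 0" using w by simp
  have ar: "real_of_int a > 0" using a by simp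
  have fz: "fst z = of_int X0 + of_int t * of_int w/(2*of_int a)" and sz: "snd z = of_int n" using z by auto
  have e: "snd z = - (2*of_int a/of_int w) * fst z + of_int (n + 2*a*i*w + t)"
    using wr ar unfolding fz sz X0 by (simp add: field_simps power2_eq_square)
  have b3: "(0::real) \<le> of_int t * of_int w/(2*of_int a)" using t wr ar by simp
  have b4: "of_int t * of_int w/(2*of_int a) \<le> real_of_int w"
  proof -
    have "real_of_int t \<le> 2 * of_int a" using t by simp
    then have "of_int t * of_int w \<le> 2 * of_int a * real_of_int w" using wr by (simp add: mult_right_mono)
    then show ?thesis using ar by (simp add: divide_le_eq mult.commute)
  qed
  show "z \<in> {z. snd z = of_int n \<and> of_int X0 \<le> fst z \<and> fst z \<le> of_int X0 + of_int w \<and>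
            (\<exists>c. snd z = - (2*of_int a/of_int w) * fst z + of_int c \<and> \<Phi> c)}"
  proof (unfold mem_Collect_eq, intro conjI)
    show "\<exists>c. snd z = - (2*of_int a/of_int w) * fst z + of_int c \<and> \<Phi> c"
      using e ph by blast
  qed (use b3 b4 fz sz in auto)
qed

lemma int_window:
  fixes N w c :: int
  assumes w: "w > 0" and nd: "\<not> w dvd N"
  shows "(N \<le> c*w \<and> c*w \<le> N + w*w) \<longleftrightarrow> c \<in> {N div w + 1..<N div w + 1 + w}"
proof -
  define c0 where "c0 = N div w"
  define r where "r = N mod w"
  have N: "N = c0*w + r" unfolding c0_def r_def by (simp add: mult.commute)
  have "0 \<le> N mod w" "N mod w < w" using w by auto
  moreover have "N mod w \<noteq> 0" using nd by (simp add: dvd_eq_mod_eq_0)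
  ultimately have r: "0 < r" "r < w" unfolding r_def by auto
  define d where "d = c - c0"
  have cw: "c*w = d*w + c0*w" unfolding d_def by (simp add: algebra_simps)
  have "(N \<le> c*w \<and> c*w \<le> N + w*w) \<longleftrightarrow> (r \<le> d*w \<and> d*w \<le> r + w*w)"
    unfolding cw N by auto
  also have "\<dots> \<longleftrightarrow> 1 \<le> d \<and> d \<le> w"
  proof
    assume h: "r \<le> d*w \<and> d*w \<le> r + w*w"
    have "1 \<le> d"
    proof (rule ccontr)
      assume "\<not> 1 \<le> d" then have "d \<le> 0" by simp
      then have "d*w \<le> 0" using w by (simp add: mult_nonpos_nonneg)
      then show False using h r by simp
    qed
    moreover have "d \<le> w"
    proof (rule ccontr)
      assume "\<not> d \<le> w" then have "w+1 \<le> d" by simp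
      then have "(w+1)*w \<le> d*w" using w by (simp add: mult_right_mono)
      then show False using h r by (simp add: algebra_simps)
    qed
    ultimately show "1 \<le> d \<and> d \<le> w" by simp
  next
    assume h: "1 \<le> d \<and> d \<le> w"
    have "1*w \<le> d*w" using h w by (intro mult_right_mono) auto
    moreover have "d*w \<le> w*w" using h w by (intro mult_right_mono) auto
    ultimately show "r \<le> d*w \<and> d*w \<le> r + w*w" using r by linarith
  qed
  also have "\<dots> \<longleftrightarrow> c \<in> {N div w + 1..<N div w + 1 + w}"
    unfolding d_def c0_def by auto
  finally show ?thesis .
qed

lemma vline_param:
  fixes a w Y0 m :: int
  assumes a: "a > 0" and w: "w > 0" and nd: "\<not> w dvd (Y0*w + 2*a*m)"
  shows "{z. fst z = (of_int m::real) \<and> of_int Y0 \<le> snd z \<and> snd z \<le> of_int Y0 + of_int w \<and>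
            (\<exists>c. snd z = - (2*of_int a/of_int w) * fst z + of_int c \<and> \<Phi> c)}
       = (\<lambda>c. (of_int m, of_int c - 2*of_int a*of_int m/of_int w)) `
           {c\<in>{(Y0*w + 2*a*m) div w + 1..<(Y0*w + 2*a*m) div w + 1 + w}. \<Phi> c}"
proof -
  have wr: "real_of_int w > 0" using w by simp
  have key: "((of_int Y0::real) \<le> of_int c - 2*of_int a*of_int m/of_int w \<and>
              of_int c - 2*of_int a*of_int m/of_int w \<le> real_of_int Y0 + of_int w)
     \<longleftrightarrow> c\<in>{(Y0*w + 2*a*m) div w + 1..<(Y0*w + 2*a*m) div w + 1 + w}" for c
  proof -
    have "((of_int Y0::real) \<le> of_int c - 2*of_int a*of_int m/of_int w \<and>
              of_int c - 2*of_int a*of_int m/of_int w \<le> real_of_int Y0 + of_int w)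
        \<longleftrightarrow> (real_of_int (Y0*w + 2*a*m) \<le> of_int (c*w) \<and> real_of_int (c*w) \<le> of_int (Y0*w + 2*a*m + w*w))"
      using wr by (simp add: field_simps)
    also have "\<dots> \<longleftrightarrow> (Y0*w + 2*a*m \<le> c*w \<and> c*w \<le> Y0*w + 2*a*m + w*w)"
      by (simp only: of_int_le_iff)
    also have "\<dots> \<longleftrightarrow> c\<in>{(Y0*w + 2*a*m) div w + 1..<(Y0*w + 2*a*m) div w + 1 + w}"
      by (rule int_window[OF w nd])
    finally show ?thesis .
  qed
  show ?thesis
  proof (intro set_eqI iffI)
    fix z :: "real \<times> real"
    assume "z \<in> {z. fst z = (of_int m::real) \<and> of_int Y0 \<le> snd z \<and> snd z \<le> of_int Y0 + of_int w \<and>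
            (\<exists>c. snd z = - (2*of_int a/of_int w) * fst z + of_int c \<and> \<Phi> c)}"
    then obtain y c where z: "z = (of_int m, y)" and b: "of_int Y0 \<le> y" "y \<le> of_int Y0 + of_int w"
      and l: "y = - (2*of_int a/of_int w) * of_int m + of_int c" and ph: "\<Phi> c"
      by (cases z) auto
    have y: "y = of_int c - 2*of_int a*of_int m/of_int w" using l by simp
    have "(of_int Y0::real) \<le> of_int c - 2*of_int a*of_int m/of_int w \<and>
              of_int c - 2*of_int a*of_int m/of_int w \<le> real_of_int Y0 + of_int w"
      using b unfolding y by simp
    then have "c\<in>{(Y0*w + 2*a*m) div w + 1..<(Y0*w + 2*a*m) div w + 1 + w}"
      using key[of c] by blast
    then show "z \<in> (\<lambda>c. (of_int m, of_int c - 2*of_int a*of_int m/of_int w)) `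
           {c\<in>{(Y0*w + 2*a*m) div w + 1..<(Y0*w + 2*a*m) div w + 1 + w}. \<Phi> c}"
      using z y ph by blast
  next
    fix z :: "real \<times> real"
    assume "z \<in> (\<lambda>c. (of_int m, of_int c - 2*of_int a*of_int m/of_int w)) `
           {c\<in>{(Y0*w + 2*a*m) div w + 1..<(Y0*w + 2*a*m) div w + 1 + w}. \<Phi> c}"
    then obtain c where z: "z = (of_int m, of_int c - 2*of_int a*of_int m/of_int w)"
      and c: "c\<in>{(Y0*w + 2*a*m) div w + 1..<(Y0*w + 2*a*m) div w + 1 + w}" and ph: "\<Phi> c" by blast
    have fz: "fst z = of_int m" and sz: "snd z = of_int c - 2*of_int a*of_int m/of_int w" using z by auto
    have e: "snd z = - (2*of_int a/of_int w) * fst z + of_int c" unfolding fz sz by simp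
    have bb: "of_int Y0 \<le> snd z \<and> snd z \<le> real_of_int Y0 + of_int w" using key[of c] c unfolding sz by blast
    show "z \<in> {z. fst z = (of_int m::real) \<and> of_int Y0 \<le> snd z \<and> snd z \<le> of_int Y0 + of_int w \<and>
            (\<exists>c. snd z = - (2*of_int a/of_int w) * fst z + of_int c \<and> \<Phi> c)}"
    proof (unfold mem_Collect_eq, intro conjI)
      show "\<exists>c. snd z = - (2*of_int a/of_int w) * fst z + of_int c \<and> \<Phi> c"
        using e ph by blast
    qed (use bb fz in auto)
  qed
qed


lemma card_single_if: "card {t\<in>{a::int}. P t} = (if P a then 1 else 0)"
proof (cases "P a")
  case True then have "{t\<in>{a::int}. P t} = {a}" by auto
  then show ?thesis using True by simp
qed auto

lemma fin_ico[simp]: "finite {t\<in>{a..<b::int}. P t}"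
  by (rule finite_subset[of _ "{a..<b}"]) auto
lemma fin_icc[simp]: "finite {t\<in>{a..b::int}. P t}"
  by (rule finite_subset[of _ "{a..b}"]) auto

lemma count_H:
  fixes L :: "int \<Rightarrow> bool" and p q w :: int and K :: nat
  assumes w: "w = p + q" "p > 0" "q > 0"
    and per: "\<And>t m. L (t + w*m) = L t"
    and sym: "\<And>t. L (-t) = L t"
    and full: "\<And>c. card {t\<in>{c..<c+w}. L t} = K"
  shows "card {t\<in>{0..2*p}. L t} + card {u\<in>{0..2*q}. L u}
       = 2*K + (if L 0 then 1 else 0) + (if L (2*p) then 1 else 0)"
proof -
  have l2: "L (2*w - u) = L u" for u
    using per[of "-u" 2] sym[of u] by (simp add: algebra_simps)
  have inj: "inj_on (\<lambda>u. 2*w - u) {u\<in>{0..2*q}. L u}" by (auto simp: inj_on_def)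
  have img: "(\<lambda>u. 2*w - u) ` {u\<in>{0..2*q}. L u} = {t\<in>{2*p..2*w}. L t}"
  proof (intro set_eqI iffI)
    fix t assume "t \<in> (\<lambda>u. 2*w - u) ` {u\<in>{0..2*q}. L u}"
    then obtain u where "u \<in> {0..2*q}" "L u" "t = 2*w - u" by blast
    then show "t \<in> {t\<in>{2*p..2*w}. L t}" using l2 w by auto
  next
    fix t assume "t \<in> {t\<in>{2*p..2*w}. L t}"
    then have "2*w - t \<in> {u\<in>{0..2*q}. L u}" using l2[of t] l2[of "2*w-t"] w by auto
    moreover have "t = 2*w - (2*w - t)" by simp
    ultimately show "t \<in> (\<lambda>u. 2*w - u) ` {u\<in>{0..2*q}. L u}" by blast
  qed
  have cB: "card {u\<in>{0..2*q}. L u} = card {t\<in>{2*p..2*w}. L t}"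
    using card_image[OF inj] img by simp
  have U: "{t\<in>{0..2*p}. L t} \<union> {t\<in>{2*p..2*w}. L t} = {t\<in>{0..2*w}. L t}" using w by auto
  have I: "{t\<in>{0..2*p}. L t} \<inter> {t\<in>{2*p..2*w}. L t} = {t\<in>{2*p}. L t}" using w by auto
  have s1: "card {t\<in>{0..2*p}. L t} + card {t\<in>{2*p..2*w}. L t}
        = card {t\<in>{0..2*w}. L t} + card {t\<in>{2*p}. L t}"
  proof -
    have "finite {t\<in>{0..2*p}. L t}" "finite {t\<in>{2*p..2*w}. L t}"
      by (rule finite_subset[of _ "{0..2*p}"], auto) (rule finite_subset[of _ "{2*p..2*w}"], auto)
    from card_Un_Int[OF this] show ?thesis unfolding U I .
  qed
  have D: "{t\<in>{0..2*w}. L t} = ({t\<in>{0..<0+w}. L t} \<union> {t\<in>{w..<w+w}. L t}) \<union> {t\<in>{2*w}. L t}"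
    using w by auto
  have "card {t\<in>{0..2*w}. L t} = (card {t\<in>{0..<0+w}. L t} + card {t\<in>{w..<w+w}. L t}) + card {t\<in>{2*w}. L t}"
  proof -
    have "card ({t\<in>{0..<0+w}. L t} \<union> {t\<in>{w..<w+w}. L t}) = card {t\<in>{0..<0+w}. L t} + card {t\<in>{w..<w+w}. L t}"
      by (intro card_Un_disjoint fin_ico) auto
    moreover have "card (({t\<in>{0..<0+w}. L t} \<union> {t\<in>{w..<w+w}. L t}) \<union> {t\<in>{2*w}. L t})
       = card ({t\<in>{0..<0+w}. L t} \<union> {t\<in>{w..<w+w}. L t}) + card {t\<in>{2*w}. L t}"
      by (intro card_Un_disjoint finite_UnI fin_ico) auto
    ultimately show ?thesis unfolding D by simp
  qed
  also have "\<dots> = 2*K + (if L 0 then 1 else 0)"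
    using full[of 0] full[of w] card_single_if[of "2*w" L] per[of 0 2] by (simp add: mult.commute)
  finally show ?thesis using s1 cB card_single_if[of "2*p" L] by simp
qed


lemma params:
  assumes "even_rat_param p q"
  defines "w \<equiv> int p + int q"
  shows "int p > 0" "int q > int p" "odd w" "w > 0"
    "coprime (int p) w" "coprime (int q) w" "coprime (int p) (int q)"
    "coprime (2 * int p) w" "coprime (4 * int p) w"
proof -
  have a: "0 < p" "p < q" "coprime p q" "even (p * q)" using assms(1) by (auto simp: even_rat_param_def)
  show "int p > 0" "int q > int p" "w > 0" using a by (auto simp: w_def)
  show cpq: "coprime (int p) (int q)" using a by simp
  show cp: "coprime (int p) w" unfolding w_def coprime_iff_gcd_eq_1 using cpq by (simp add: coprime_iff_gcd_eq_1)
  show cq: "coprime (int q) w" unfolding w_def coprime_iff_gcd_eq_1 using cpq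
    by (metis add.commute coprime_commute coprime_iff_gcd_eq_1 gcd_add2)
  have "\<not> (even p \<and> even q)" using a(3)
    by (metis coprime_common_divisor_nat dvd_add_triv_right_iff even_add odd_one)
  moreover have "even p \<or> even q" using a(4) by auto
  ultimately show ow: "odd w" unfolding w_def by auto
  have c2: "coprime 2 w" using ow by (simp add: coprime_commute[of 2] )
  show "coprime (2 * int p) w" using c2 cp by simp
  have c4: "coprime 4 w" using c2 by (metis coprime_mult_left_iff mult_2 numeral_Bit0 numeral_One one_add_one)
  show "coprime (4 * int p) w" using c4 cp by simp
qed

lemma omega_eq: "real (omega p q) = of_int (int p + int q)" "int (omega p q) = int p + int q"
  by (simp_all add: omega_def)

lemma bigP_eq: "bigP p q = 2 * of_int (int p) / of_int (int p + int q)"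
  by (simp add: bigP_def omega_def)
lemma bigQ_eq: "bigQ p q = 2 * of_int (int q) / of_int (int p + int q)"
  by (simp add: bigQ_def omega_def)

lemma FH_val:
  assumes "int p + int q > 0" "snd z = of_int n"
  shows "F_H p q z = of_int (RR (int p + int q) (4 * int p * n)) / of_int (int p + int q)"
proof -
  have e: "2 * bigP p q * snd z = of_int (4 * int p * n) / of_int (int p + int q)"
    using assms by (simp add: bigP_eq field_simps)
  show ?thesis unfolding F_H_def e by (rule rep2_RR[OF assms(1)])
qed

lemma FV_val:
  assumes "int p + int q > 0" "fst z = of_int n"
  shows "F_V p q z = of_int (RR (int p + int q) (4 * int p * n)) / of_int (int p + int q)"
proof -
  have e: "2 * bigP p q * fst z = of_int (4 * int p * n) / of_int (int p + int q)"
    using assms by (simp add: bigP_eq field_simps)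
  show ?thesis unfolding F_V_def e by (rule rep2_RR[OF assms(1)])
qed

lemma FP_val:
  assumes "int p + int q > 0" "snd z = - bigP p q * fst z + of_int c"
  shows "F_P p q z = of_int (RR (int p + int q) ((int p + int q) + 2 * int p * c)) / of_int (int p + int q)"
proof -
  have e1: "bigP p q * snd z + (bigP p q)\<^sup>2 * fst z + 1 = bigP p q * (snd z + bigP p q * fst z) + 1"
    by (simp add: power2_eq_square algebra_simps)
  have e2: "snd z + bigP p q * fst z = of_int c" using assms(2) by simp
  have e3: "bigP p q * of_int c + 1 = of_int ((int p + int q) + 2 * int p * c) / of_int (int p + int q)"
    using assms(1) by (simp add: bigP_eq field_simps)
  have "bigP p q * snd z + (bigP p q)\<^sup>2 * fst z + 1 = of_int ((int p + int q) + 2 * int p * c) / of_int (int p + int q)"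
    using e1 e2 e3 by simp
  then show ?thesis unfolding F_P_def by (simp only: rep2_RR[OF assms(1)])
qed

lemma FQ_val:
  assumes "int p + int q > 0" "snd z = - bigQ p q * fst z + of_int c"
  shows "F_Q p q z = of_int (RR (int p + int q) ((int p + int q) + 2 * int p * c)) / of_int (int p + int q)"
proof -
  have e1: "bigP p q * snd z + bigP p q * bigQ p q * fst z + 1 = bigP p q * (snd z + bigQ p q * fst z) + 1"
    by (simp add: power2_eq_square algebra_simps)
  have e2: "snd z + bigQ p q * fst z = of_int c" using assms(2) by simp
  have e3: "bigP p q * of_int c + 1 = of_int ((int p + int q) + 2 * int p * c) / of_int (int p + int q)"
    using assms(1) by (simp add: bigP_eq field_simps)
  have "bigP p q * snd z + bigP p q * bigQ p q * fst z + 1 = of_int ((int p + int q) + 2 * int p * c) / of_int (int p + int q)"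
    using e1 e2 e3 by simp
  then show ?thesis unfolding F_Q_def by (simp only: rep2_RR[OF assms(1)])
qed

definition LT :: "int \<Rightarrow> int \<Rightarrow> bool" where
  "LT h v \<longleftrightarrow> v * h > 0 \<and> \<bar>v\<bar> < \<bar>h\<bar>"

lemma light_wrt_iff:
  fixes z :: "real \<times> real"
  assumes w: "int p + int q > 0" and FA: "FA z = of_int h / of_int (int p + int q)"
  shows "light_wrt p q FA z \<longleftrightarrow>
    (\<exists>c. snd z = - (2*of_int (int p)/of_int (int p + int q)) * fst z + of_int c \<and>
          LT h (RR (int p + int q) ((int p + int q) + 2 * int p * c))) \<or>
    (\<exists>c. snd z = - (2*of_int (int q)/of_int (int p + int q)) * fst z + of_int c \<and>
          LT h (RR (int p + int q) ((int p + int q) + 2 * int p * c)))"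
proof -
  define w where "w = int p + int q"
  have wr: "real_of_int w > 0" using w by (simp add: w_def)
  have key: "FA z * (of_int v / of_int w) > 0 \<and> \<bar>of_int v / of_int w\<bar> < \<bar>FA z\<bar> \<longleftrightarrow> LT h v" for v
  proof -
    have "FA z * (of_int v / of_int w) = of_int (h * v) / (of_int w * of_int w)"
      using FA by (simp add: w_def)
    moreover have "of_int w * of_int w > (0::real)" using wr by simp
    ultimately have "FA z * (of_int v / of_int w) > 0 \<longleftrightarrow> real_of_int (h * v) > 0"
      by (simp add: zero_less_divide_iff)
    then have 1: "FA z * (of_int v / of_int w) > 0 \<longleftrightarrow> v * h > 0"
      by (simp only: of_int_0_less_iff mult.commute)
    have "\<bar>of_int v / of_int w\<bar> < \<bar>FA z\<bar> \<longleftrightarrow> \<bar>real_of_int v\<bar> / of_int w < \<bar>of_int h\<bar> / of_int w"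
      using FA wr by (simp add: w_def)
    also have "\<dots> \<longleftrightarrow> \<bar>v\<bar> < \<bar>h\<bar>" using wr by (simp add: divide_less_cancel) (metis of_int_abs of_int_less_iff)
    finally show ?thesis using 1 by (simp add: LT_def)
  qed
  have P: "z \<in> \<Union>(Plines p q) \<and> FA z * F_P p q z > 0 \<and> \<bar>F_P p q z\<bar> < \<bar>FA z\<bar> \<longleftrightarrow>
    (\<exists>c. snd z = - (2*of_int (int p)/of_int w) * fst z + of_int c \<and> LT h (RR w (w + 2 * int p * c)))"
  proof
    assume h: "z \<in> \<Union>(Plines p q) \<and> FA z * F_P p q z > 0 \<and> \<bar>F_P p q z\<bar> < \<bar>FA z\<bar>"
    then obtain c where c: "snd z = - bigP p q * fst z + of_int c" by (auto simp: Plines_def)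
    have "F_P p q z = of_int (RR w (w + 2 * int p * c)) / of_int w" using FP_val[OF w c] by (simp add: w_def)
    then have "LT h (RR w (w + 2 * int p * c))" using h key by auto
    then show "\<exists>c. snd z = - (2*of_int (int p)/of_int w) * fst z + of_int c \<and> LT h (RR w (w + 2 * int p * c))"
      using c by (auto simp: bigP_eq w_def)
  next
    assume "\<exists>c. snd z = - (2*of_int (int p)/of_int w) * fst z + of_int c \<and> LT h (RR w (w + 2 * int p * c))"
    then obtain c where c: "snd z = - bigP p q * fst z + of_int c" and l: "LT h (RR w (w + 2 * int p * c))"
      by (auto simp: bigP_eq w_def)
    have "F_P p q z = of_int (RR w (w + 2 * int p * c)) / of_int w" using FP_val[OF w c] by (simp add: w_def)
    moreover have "z \<in> \<Union>(Plines p q)" using c by (auto simp: Plines_def)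
    ultimately show "z \<in> \<Union>(Plines p q) \<and> FA z * F_P p q z > 0 \<and> \<bar>F_P p q z\<bar> < \<bar>FA z\<bar>"
      using key l by auto
  qed
  have Q: "z \<in> \<Union>(Qlines p q) \<and> FA z * F_Q p q z > 0 \<and> \<bar>F_Q p q z\<bar> < \<bar>FA z\<bar> \<longleftrightarrow>
    (\<exists>c. snd z = - (2*of_int (int q)/of_int w) * fst z + of_int c \<and> LT h (RR w (w + 2 * int p * c)))"
  proof
    assume h: "z \<in> \<Union>(Qlines p q) \<and> FA z * F_Q p q z > 0 \<and> \<bar>F_Q p q z\<bar> < \<bar>FA z\<bar>"
    then obtain c where c: "snd z = - bigQ p q * fst z + of_int c" by (auto simp: Qlines_def)
    have "F_Q p q z = of_int (RR w (w + 2 * int p * c)) / of_int w" using FQ_val[OF w c] by (simp add: w_def)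
    then have "LT h (RR w (w + 2 * int p * c))" using h key by auto
    then show "\<exists>c. snd z = - (2*of_int (int q)/of_int w) * fst z + of_int c \<and> LT h (RR w (w + 2 * int p * c))"
      using c by (auto simp: bigQ_eq w_def)
  next
    assume "\<exists>c. snd z = - (2*of_int (int q)/of_int w) * fst z + of_int c \<and> LT h (RR w (w + 2 * int p * c))"
    then obtain c where c: "snd z = - bigQ p q * fst z + of_int c" and l: "LT h (RR w (w + 2 * int p * c))"
      by (auto simp: bigQ_eq w_def)
    have "F_Q p q z = of_int (RR w (w + 2 * int p * c)) / of_int w" using FQ_val[OF w c] by (simp add: w_def)
    moreover have "z \<in> \<Union>(Qlines p q)" using c by (auto simp: Qlines_def)
    ultimately show "z \<in> \<Union>(Qlines p q) \<and> FA z * F_Q p q z > 0 \<and> \<bar>F_Q p q z\<bar> < \<bar>FA z\<bar>"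
      using key l by auto
  qed
  show ?thesis unfolding light_wrt_def P Q w_def by simp
qed


lemma X_H:
  assumes L: "L = {z. snd z = (of_int n::real)}"
  shows "{z \<in> L \<inter> B. \<exists>s. (hseg s \<or> vseg s) \<and> s \<subseteq> L \<and> light_point p q s z}
       = {z \<in> L \<inter> B. light_wrt p q (F_H p q) z}"
proof (intro set_eqI iffI)
  fix z assume "z \<in> {z \<in> L \<inter> B. \<exists>s. (hseg s \<or> vseg s) \<and> s \<subseteq> L \<and> light_point p q s z}"
  then obtain s where z: "z \<in> L \<inter> B" and s: "s \<subseteq> L" "light_point p q s z" by blast
  have "\<not> vseg s"
  proof
    assume "vseg s"
    then obtain m n0 :: int where sd: "s = {(of_int m, y) | y. of_int n0 \<le> y \<and> y \<le> of_int n0 + 1}"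
      by (auto simp: vseg_def)
    have "(of_int m, of_int n0) \<in> s" "(of_int m, of_int n0 + 1) \<in> s" unfolding sd by auto
    then have "(of_int n0::real) = of_int n" "(of_int n0::real) + 1 = of_int n" using s(1) L by auto
    then show False by simp
  qed
  then show "z \<in> {z \<in> L \<inter> B. light_wrt p q (F_H p q) z}" using z s(2) by (auto simp: light_point_def)
next
  fix z assume a: "z \<in> {z \<in> L \<inter> B. light_wrt p q (F_H p q) z}"
  define s where "s = {(x::real, (of_int n::real)) | x. of_int \<lfloor>fst z\<rfloor> \<le> x \<and> x \<le> of_int \<lfloor>fst z\<rfloor> + 1}"
  have hs: "hseg s" unfolding s_def hseg_def by blast
  have sL: "s \<subseteq> L" unfolding s_def L by auto
  have "snd z = of_int n" using a L by auto
  then have "z = (fst z, of_int n)" by (cases z) auto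
  moreover have "of_int \<lfloor>fst z\<rfloor> \<le> fst z \<and> fst z \<le> of_int \<lfloor>fst z\<rfloor> + 1" by linarith
  ultimately have "z \<in> s" unfolding s_def by blast
  then have "light_point p q s z" using hs a by (auto simp: light_point_def)
  then show "z \<in> {z \<in> L \<inter> B. \<exists>s. (hseg s \<or> vseg s) \<and> s \<subseteq> L \<and> light_point p q s z}"
    using a hs sL by blast
qed

lemma X_V:
  assumes L: "L = {z. fst z = (of_int m::real)}"
  shows "{z \<in> L \<inter> B. \<exists>s. (hseg s \<or> vseg s) \<and> s \<subseteq> L \<and> light_point p q s z}
       = {z \<in> L \<inter> B. light_wrt p q (F_V p q) z}"
proof (intro set_eqI iffI)
  fix z assume "z \<in> {z \<in> L \<inter> B. \<exists>s. (hseg s \<or> vseg s) \<and> s \<subseteq> L \<and> light_point p q s z}"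
  then obtain s where z: "z \<in> L \<inter> B" and s: "s \<subseteq> L" "light_point p q s z" by blast
  have "\<not> hseg s"
  proof
    assume "hseg s"
    then obtain m0 n0 :: int where sd: "s = {(x, of_int n0) | x. of_int m0 \<le> x \<and> x \<le> of_int m0 + 1}"
      by (auto simp: hseg_def)
    have "(of_int m0, of_int n0) \<in> s" "(of_int m0 + 1, of_int n0) \<in> s" unfolding sd by auto
    then have "(of_int m0::real) = of_int m" "(of_int m0::real) + 1 = of_int m" using s(1) L by auto
    then show False by simp
  qed
  then show "z \<in> {z \<in> L \<inter> B. light_wrt p q (F_V p q) z}" using z s(2) by (auto simp: light_point_def)
next
  fix z assume a: "z \<in> {z \<in> L \<inter> B. light_wrt p q (F_V p q) z}"
  define s where "s = {((of_int m::real), y::real) | y. of_int \<lfloor>snd z\<rfloor> \<le> y \<and> y \<le> of_int \<lfloor>snd z\<rfloor> + 1}"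
  have hs: "vseg s" unfolding s_def vseg_def by blast
  have sL: "s \<subseteq> L" unfolding s_def L by auto
  have "fst z = of_int m" using a L by auto
  then have "z = (of_int m, snd z)" by (cases z) auto
  moreover have "of_int \<lfloor>snd z\<rfloor> \<le> snd z \<and> snd z \<le> of_int \<lfloor>snd z\<rfloor> + 1" by linarith
  ultimately have "z \<in> s" unfolding s_def by blast
  then have "light_point p q s z" using hs a by (auto simp: light_point_def)
  then show "z \<in> {z \<in> L \<inter> B. \<exists>s. (hseg s \<or> vseg s) \<and> s \<subseteq> L \<and> light_point p q s z}"
    using a hs sL by blast
qed

lemma Hlines_iff: "L \<in> Hlines \<longleftrightarrow> (\<exists>n. L = {z. snd z = of_int n})"
  by (auto simp: Hlines_def)
lemma Vlines_iff: "L \<in> Vlines \<longleftrightarrow> (\<exists>n. L = {z. fst z = of_int n})"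
  by (auto simp: Vlines_def)

lemma V_notin_H: "{z. fst z = (of_int m::real)} \<notin> Hlines"
proof
  assume "{z. fst z = (of_int m::real)} \<in> Hlines"
  then obtain n where e: "{z::real\<times>real. fst z = (of_int m::real)} = {z. snd z = of_int n}" by (auto simp: Hlines_def)
  have "((of_int m::real), (of_int n::real) + 1) \<in> {z::real\<times>real. fst z = (of_int m::real)}" by simp
  then have "((of_int m::real), (of_int n::real) + 1) \<in> {z::real\<times>real. snd z = of_int n}" by (simp only: e)
  then show False by simp
qed

lemma cap_H:
  assumes "int p + int q > 0"
  shows "capacity p q {z. snd z = of_int n} = \<bar>of_int (RR (int p + int q) (4 * int p * n))\<bar>"
proof -
  let ?z = "SOME z. z \<in> {z::real\<times>real. snd z = (of_int n::real)}"
  have "?z \<in> {z::real\<times>real. snd z = (of_int n::real)}" by (rule someI[of _ "(0, of_int n)"]) simp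
  then have "snd ?z = of_int n" by simp
  from FH_val[OF assms this] have "F_H p q ?z = of_int (RR (int p + int q) (4 * int p * n)) / of_int (int p + int q)" .
  moreover have "{z. snd z = (of_int n::real)} \<in> Hlines" by (auto simp: Hlines_def)
  ultimately show ?thesis unfolding capacity_def using assms by (simp add: omega_def)
qed

lemma cap_V:
  assumes "int p + int q > 0"
  shows "capacity p q {z. fst z = of_int n} = \<bar>of_int (RR (int p + int q) (4 * int p * n))\<bar>"
proof -
  let ?z = "SOME z. z \<in> {z::real\<times>real. fst z = (of_int n::real)}"
  have "?z \<in> {z::real\<times>real. fst z = (of_int n::real)}" by (rule someI[of _ "(of_int n, 0)"]) simp
  then have "fst ?z = of_int n" by simp
  from FV_val[OF assms this] have "F_V p q ?z = of_int (RR (int p + int q) (4 * int p * n)) / of_int (int p + int q)" .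
  then show ?thesis unfolding capacity_def using assms V_notin_H by (simp add: omega_def)
qed

lemma block_form:
  assumes "B \<in> blocks p q"
  obtains i j :: int where
    "B = {z. of_int (i * (int p + int q)^2) \<le> fst z \<and> fst z \<le> of_int (i * (int p + int q)^2) + of_int (int p + int q) \<and>
             of_int (j * (int p + int q)) \<le> snd z \<and> snd z \<le> of_int (j * (int p + int q)) + of_int (int p + int q)}"
proof -
  from assms obtain i j :: int where B: "B = {(x, y). real_of_int (i * int (omega p q)^2) \<le> x \<and>
                         x \<le> real_of_int (i * int (omega p q)^2) + real (omega p q) \<and>
                         real_of_int (j * int (omega p q)) \<le> y \<and>
                         y \<le> real_of_int (j * int (omega p q)) + real (omega p q)}"
    by (auto simp: blocks_def)
  show ?thesis
    by (rule that[of i j]) (auto simp: B omega_eq simp del: of_int_add of_int_mult of_int_power of_int_of_nat_eq)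
qed


lemma RR_id: "-w < u \<Longrightarrow> u \<le> w \<Longrightarrow> RR w u = u"
  unfolding RR_def by (subst mod_pos_pos_trivial) auto

lemma RR_unique: "-w < u \<Longrightarrow> u \<le> w \<Longrightarrow> (2*w) dvd (y - u) \<Longrightarrow> RR w y = u"
  using RR_cong[of w y u] RR_id by simp

lemma LT_RR_sym:
  assumes w: "w > 0" and hb: "-w < h" "h \<le> w" and d: "(2*w) dvd (h - x - y)"
    and l: "LT h (RR w x)"
  shows "LT h (RR w y)"
proof -
  define v where "v = RR w x"
  have lv: "v * h > 0" "\<bar>v\<bar> < \<bar>h\<bar>" using l by (auto simp: LT_def v_def)
  define u where "u = h - v"
  have ub: "-w < u \<and> u \<le> w \<and> u * h > 0 \<and> \<bar>u\<bar> < \<bar>h\<bar>"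
  proof (cases "h > 0")
    case True
    then have "v > 0" using lv by (simp add: zero_less_mult_iff)
    then show ?thesis using True lv hb unfolding u_def by (auto simp: zero_less_mult_iff)
  next
    case False
    then have "h < 0" using lv by (cases "h = 0") auto
    then have "v < 0" using lv by (simp add: zero_less_mult_iff)
    then show ?thesis using \<open>h < 0\<close> lv hb unfolding u_def by (auto simp: zero_less_mult_iff)
  qed
  have "(2*w) dvd ((h - x - y) + (x - v))" using d RR_dvd[of w x] unfolding v_def by (rule dvd_add)
  then have "(2*w) dvd (-(y - u))" unfolding u_def by (simp add: algebra_simps)
  then have "(2*w) dvd (y - u)" by (simp only: dvd_minus_iff)
  then have "RR w y = u" using ub by (intro RR_unique) auto
  then show ?thesis using ub by (simp add: LT_def)
qed

lemma card_three:
  fixes p :: int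
  assumes "p \<noteq> 0"
  shows "card {t\<in>{0,p,2*p}. P t} = (if P 0 then 1 else 0) + (if P p then 1 else 0) + (if P (2*p) then 1 else 0)"
proof -
  have e: "{t\<in>{0,p,2*p}. P t} = ({t\<in>{0}. P t} \<union> {t\<in>{p}. P t}) \<union> {t\<in>{2*p}. P t}" by auto
  have "card (({t\<in>{0}. P t} \<union> {t\<in>{p}. P t}) \<union> {t\<in>{2*p}. P t})
        = card ({t\<in>{0}. P t} \<union> {t\<in>{p}. P t}) + card {t\<in>{2*p}. P t}"
    using assms by (intro card_Un_disjoint) auto
  also have "card ({t\<in>{0}. P t} \<union> {t\<in>{p}. P t}) = card {t\<in>{0}. P t} + card {t\<in>{p}. P t}"
    using assms by (intro card_Un_disjoint) auto
  finally show ?thesis unfolding e card_single_if by simp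
qed


lemma light_count_H:
  fixes p q :: nat and i X0 Y0 n :: int and B :: "(real \<times> real) set"
  assumes ep: "even_rat_param p q"
    and B: "B = {z. of_int X0 \<le> fst z \<and> fst z \<le> of_int X0 + of_int (int p + int q) \<and>
                   of_int Y0 \<le> snd z \<and> snd z \<le> of_int Y0 + of_int (int p + int q)}"
    and X0: "X0 = i * (int p + int q)^2"
    and n: "Y0 \<le> n" "n \<le> Y0 + (int p + int q)"
  shows "light_count p q {z. snd z = of_int n} B = nat \<bar>RR (int p + int q) (4*int p*n)\<bar>"
proof -
  define w where "w = int p + int q"
  note prm = params[OF ep, folded w_def]
  have w0: "w > 0" using prm by simp
  have p0: "int p > 0" using prm by simp
  have q0: "int q > 0" using prm by simp
  have wr: "real_of_int w > 0" using w0 by simp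
  define h where "h = RR w (4 * int p * n)"
  define b where "b = w + 2*int p*n"
  define l where "l t = LT h (RR w (b + 2*int p*t))" for t
  define L where "L = {z::real\<times>real. snd z = of_int n}"
  define X where "X = {z \<in> L \<inter> B. \<exists>s. (hseg s \<or> vseg s) \<and> s \<subseteq> L \<and> light_point p q s z}"
  define f where "f t = ((of_int X0::real) + of_int t * of_int w/(2*of_int (int p)), (of_int n::real))" for t
  define g where "g u = ((of_int X0::real) + of_int u * of_int w/(2*of_int (int q)), (of_int n::real))" for u
  define XP where "XP = {z. snd z = (of_int n::real) \<and> of_int X0 \<le> fst z \<and> fst z \<le> of_int X0 + of_int w \<and>
            (\<exists>c. snd z = - (2*of_int (int p)/of_int w) * fst z + of_int c \<and> LT h (RR w (w + 2*int p*c)))}"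
  define XQ where "XQ = {z. snd z = (of_int n::real) \<and> of_int X0 \<le> fst z \<and> fst z \<le> of_int X0 + of_int w \<and>
            (\<exists>c. snd z = - (2*of_int (int q)/of_int w) * fst z + of_int c \<and> LT h (RR w (w + 2*int p*c)))}"
  have LC: "light_count p q L B = card X + card {z\<in>X. hmidpoint z}"
    unfolding light_count_def X_def Let_def by simp
  have X1: "X = {z\<in>L\<inter>B. light_wrt p q (F_H p q) z}" unfolding X_def by (rule X_H[OF L_def])
  have X2: "X = XP \<union> XQ"
  proof (intro set_eqI)
    fix z :: "real \<times> real"
    show "z \<in> X \<longleftrightarrow> z \<in> XP \<union> XQ"
    proof (cases "snd z = of_int n")
      case True
      have FA: "F_H p q z = of_int h / of_int (int p + int q)"
        using FH_val[of p q z n] True w0 unfolding h_def w_def by simp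
      have LB: "z \<in> L \<inter> B \<longleftrightarrow> of_int X0 \<le> fst z \<and> fst z \<le> of_int X0 + of_int w"
        using True n unfolding L_def B w_def by simp
      show ?thesis unfolding X1 XP_def XQ_def using light_wrt_iff[of p q "F_H p q" z h] FA w0 True LB
        unfolding w_def by auto
    next
      case False
      then show ?thesis unfolding X1 XP_def XQ_def L_def by auto
    qed
  qed
  have X0w: "X0 = i * w^2" using X0 unfolding w_def .
  have XPf: "XP = f ` {t\<in>{0..2*int p}. l t}"
  proof -
    have "XP = f ` {t\<in>{0..2*int p}. LT h (RR w (w + 2*int p*(n + 2*int p*i*w + t)))}"
      unfolding XP_def f_def by (rule hline_param[OF p0 w0 X0w])
    moreover have "LT h (RR w (w + 2*int p*(n + 2*int p*i*w + t))) = l t" for t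
    proof -
      have "(w + 2*int p*(n + 2*int p*i*w + t)) - (b + 2*int p*t) = 2*w*(2*int p*int p*i)"
        unfolding b_def by (simp add: algebra_simps)
      then have "RR w (w + 2*int p*(n + 2*int p*i*w + t)) = RR w (b + 2*int p*t)"
        by (intro RR_cong) simp
      then show ?thesis unfolding l_def by simp
    qed
    ultimately show ?thesis by simp
  qed
  have XQg: "XQ = g ` {u\<in>{0..2*int q}. l u}"
  proof -
    have "XQ = g ` {t\<in>{0..2*int q}. LT h (RR w (w + 2*int p*(n + 2*int q*i*w + t)))}"
      unfolding XQ_def g_def by (rule hline_param[OF q0 w0 X0w])
    moreover have "LT h (RR w (w + 2*int p*(n + 2*int q*i*w + t))) = l t" for t
    proof -
      have "(w + 2*int p*(n + 2*int q*i*w + t)) - (b + 2*int p*t) = 2*w*(2*int p*int q*i)"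
        unfolding b_def by (simp add: algebra_simps)
      then have "RR w (w + 2*int p*(n + 2*int q*i*w + t)) = RR w (b + 2*int p*t)"
        by (intro RR_cong) simp
      then show ?thesis unfolding l_def by simp
    qed
    ultimately show ?thesis by simp
  qed
  have injf: "inj_on f A" for A using wr p0 by (auto simp: inj_on_def f_def)
  have injg: "inj_on g A" for A using wr q0 by (auto simp: inj_on_def g_def)
  have per: "l (t + w*m) = l t" for t m
  proof -
    have "(b + 2*int p*(t + w*m)) - (b + 2*int p*t) = 2*w*(int p*m)" by (simp add: algebra_simps)
    then have "RR w (b + 2*int p*(t + w*m)) = RR w (b + 2*int p*t)" by (intro RR_cong) simp
    then show ?thesis unfolding l_def by simp
  qed
  have hb: "-w < h" "h \<le> w" using RR_bounds[OF w0] unfolding h_def by auto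
  have sym1: "l t \<Longrightarrow> l (-t)" for t
  proof -
    assume "l t"
    have "(2*w) dvd (4 * int p * n - h)" unfolding h_def by (rule RR_dvd)
    then have "(2*w) dvd (-(4 * int p * n - h))" by (simp only: dvd_minus_iff)
    then have "(2*w) dvd (-(4 * int p * n - h) - 2*w)" by (rule dvd_diff) simp
    moreover have "-(4 * int p * n - h) - 2*w = h - (b + 2*int p*t) - (b + 2*int p*(-t))"
      unfolding b_def by (simp add: algebra_simps)
    ultimately have "(2*w) dvd (h - (b + 2*int p*t) - (b + 2*int p*(-t)))" by metis
    then show "l (-t)" using LT_RR_sym[OF w0 hb] \<open>l t\<close> unfolding l_def by blast
  qed
  have sym: "l (-t) = l t" for t using sym1[of t] sym1[of "-t"] by auto
  have hev: "even h"
  proof -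
    have "even (h - 4*int p*n)" unfolding h_def by (rule RR_even)
    then show ?thesis by (simp add: even_diff)
  qed
  have bodd: "odd b" using prm unfolding b_def by simp
  define K where "K = nat \<bar>h\<bar> div 2"
  have full: "card {t\<in>{c..<c+w}. l t} = K" for c
  proof -
    have "card {t\<in>{c..<c+w}. l t} = card {v \<in> Tset w b. LT h v}"
      unfolding l_def by (rule period_count[OF w0 \<open>odd w\<close> \<open>coprime (int p) w\<close>])
    also have "\<dots> = K" unfolding LT_def K_def using light_card[OF bodd hev] hb by simp
    finally show ?thesis .
  qed
  have cnt: "card {t\<in>{0..2*int p}. l t} + card {u\<in>{0..2*int q}. l u}
       = 2*K + (if l 0 then 1 else 0) + (if l (2*int p) then 1 else 0)"
    by (rule count_H[OF w_def p0 q0 per sym full])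
  have lq: "l (int q * e) = l (int p * e)" for e
  proof -
    have "l (int q * e) = l (-(int p * e) + w*e)" unfolding w_def by (simp add: algebra_simps)
    also have "\<dots> = l (-(int p * e))" by (rule per)
    also have "\<dots> = l (int p * e)" by (rule sym)
    finally show ?thesis .
  qed
  have fg: "f t = g u \<Longrightarrow> t * int q = u * int p" for t u
  proof -
    assume "f t = g u"
    then have "of_int t * of_int w/(2*real p) = of_int u * of_int w/(2*real q)"
      unfolding f_def g_def by simp
    then have "real_of_int t * real q = of_int u * real p" using wr p0 q0 by (simp add: field_simps)
    then have "real_of_int (t * int q) = real_of_int (u * int p)" by simp
    then show ?thesis by (simp only: of_int_eq_iff)
  qed
  have fg2: "f (int p * e) = g (int q * e)" for e
    unfolding f_def g_def using p0 q0 by (simp add: field_simps)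
  have I: "XP \<inter> XQ = f ` {t\<in>{0, int p, 2*int p}. l t}"
  proof (intro set_eqI iffI)
    fix z assume "z \<in> XP \<inter> XQ"
    then obtain t u where t: "t \<in> {0..2*int p}" "l t" "z = f t" and u: "u \<in> {0..2*int q}" "z = g u"
      unfolding XPf XQg by blast
    have tq: "t * int q = u * int p" using fg t(3) u(2) by simp
    then have "int p dvd t * int q" by simp
    then have "int p dvd t" using \<open>coprime (int p) (int q)\<close> by (simp add: coprime_dvd_mult_left_iff)
    then obtain e where e: "t = int p * e" by blast
    have "0 \<le> e" "e \<le> 2" using t(1) p0 unfolding e by (auto simp: zero_le_mult_iff mult_le_cancel_left1)
    then have "e = 0 \<or> e = 1 \<or> e = 2" by auto
    then have "t \<in> {0, int p, 2*int p}" using e by auto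
    then show "z \<in> f ` {t\<in>{0, int p, 2*int p}. l t}" using t by blast
  next
    fix z assume "z \<in> f ` {t\<in>{0, int p, 2*int p}. l t}"
    then obtain t where t: "t \<in> {0, int p, 2*int p}" "l t" "z = f t" by blast
    then have "t = int p * 0 \<or> t = int p * 1 \<or> t = int p * 2" by auto
    then obtain e where "e \<in> {0,1,2::int}" "t = int p * e" by blast
    then have e: "e \<in> {0,1,2::int}" "l (int p * e)" "z = f (int p * e)" using t by auto
    have "int p * e \<in> {0..2*int p}" using e(1) p0 by auto
    then have "z \<in> XP" unfolding XPf using e by blast
    moreover have "int q * e \<in> {0..2*int q}" using e(1) q0 by auto
    then have "z \<in> XQ" unfolding XQg using e fg2 lq by auto
    ultimately show "z \<in> XP \<inter> XQ" by blast
  qed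
  have cI: "card (XP \<inter> XQ) = (if l 0 then 1 else 0) + (if l (int p) then 1 else 0) + (if l (2*int p) then 1 else 0)"
    unfolding I card_image[OF injf] using card_three[of "int p" l] p0 by simp
  have cU: "card X + card (XP \<inter> XQ) = card {t\<in>{0..2*int p}. l t} + card {u\<in>{0..2*int q}. l u}"
  proof -
    have "card (XP \<union> XQ) + card (XP \<inter> XQ) = card XP + card XQ"
      unfolding XPf XQg by (intro card_Un_Int[symmetric] finite_imageI fin_icc)
    then show ?thesis unfolding X2 XPf XQg card_image[OF injf] card_image[OF injg] .
  qed
  have mid_t: "hmidpoint (f t) \<Longrightarrow> t \<in> {0..2*int p} \<Longrightarrow> t = int p" for t
  proof -
    assume hm: "hmidpoint (f t)" and tr: "t \<in> {0..2*int p}"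
    then obtain M where "of_int X0 + of_int t * of_int w/(2*real p) = of_int M + 1/2"
      unfolding hmidpoint_def f_def by auto
    then have "2*real p * of_int X0 + of_int t * of_int w = 2*real p * of_int M + real p"
      using p0 by (simp add: field_simps)
    then have "real_of_int (t * w) = real_of_int (int p * (2*(M - X0) + 1))"
      by (simp add: algebra_simps)
    then have tw: "t * w = int p * (2*(M - X0) + 1)" by (simp only: of_int_eq_iff)
    then have "int p dvd t * w" by simp
    then have "int p dvd t" using \<open>coprime (int p) w\<close> by (simp add: coprime_dvd_mult_left_iff)
    then obtain e where e: "t = int p * e" by blast
    then have "int p * (e * w) = int p * (2*(M - X0) + 1)" using tw by (simp add: algebra_simps)
    then have "e * w = 2*(M - X0) + 1" using p0 by simp
    then have "odd e" by (metis even_mult_iff odd_two_times_div_two_succ dvd_triv_left even_add odd_one)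
    moreover have "0 \<le> e" "e \<le> 2" using tr p0 unfolding e by (auto simp: zero_le_mult_iff)
    ultimately have "e = 1" by presburger
    then show ?thesis using e by simp
  qed
  have mid_u: "hmidpoint (g u) \<Longrightarrow> u \<in> {0..2*int q} \<Longrightarrow> u = int q" for u
  proof -
    assume hm: "hmidpoint (g u)" and tr: "u \<in> {0..2*int q}"
    then obtain M where "of_int X0 + of_int u * of_int w/(2*real q) = of_int M + 1/2"
      unfolding hmidpoint_def g_def by auto
    then have "2*real q * of_int X0 + of_int u * of_int w = 2*real q * of_int M + real q"
      using q0 by (simp add: field_simps)
    then have "real_of_int (u * w) = real_of_int (int q * (2*(M - X0) + 1))"
      by (simp add: algebra_simps)
    then have tw: "u * w = int q * (2*(M - X0) + 1)" by (simp only: of_int_eq_iff)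
    then have "int q dvd u * w" by simp
    then have "int q dvd u" using \<open>coprime (int q) w\<close> by (simp add: coprime_dvd_mult_left_iff)
    then obtain e where e: "u = int q * e" by blast
    then have "int q * (e * w) = int q * (2*(M - X0) + 1)" using tw by (simp add: algebra_simps)
    then have "e * w = 2*(M - X0) + 1" using q0 by simp
    then have "odd e" by (metis even_mult_iff odd_two_times_div_two_succ dvd_triv_left even_add odd_one)
    moreover have "0 \<le> e" "e \<le> 2" using tr q0 unfolding e by (auto simp: zero_le_mult_iff)
    ultimately have "e = 1" by presburger
    then show ?thesis using e by simp
  qed
  have hmp: "hmidpoint (f (int p))"
  proof -
    obtain r where r: "w = 2*r + 1" using \<open>odd w\<close> by (metis oddE)
    have "fst (f (int p)) = of_int (X0 + r) + 1/2" unfolding f_def r using p0 by (simp add: field_simps)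
    moreover have "snd (f (int p)) = of_int n" unfolding f_def by simp
    ultimately have "f (int p) = (of_int (X0 + r) + 1/2, of_int n)" by (metis prod.collapse)
    then show ?thesis unfolding hmidpoint_def by blast
  qed
  have M: "{z\<in>X. hmidpoint z} = f ` {t\<in>{int p}. l t}"
  proof (intro set_eqI iffI)
    fix z assume "z \<in> {z\<in>X. hmidpoint z}"
    then have z: "z \<in> XP \<union> XQ" "hmidpoint z" unfolding X2 by auto
    show "z \<in> f ` {t\<in>{int p}. l t}"
    proof (cases "z \<in> XP")
      case True
      then obtain t where t: "t \<in> {0..2*int p}" "l t" "z = f t" unfolding XPf by blast
      then have "t = int p" using mid_t z(2) by simp
      then show ?thesis using t by blast
    next
      case False
      then have "z \<in> XQ" using z by blast
      then obtain u where u: "u \<in> {0..2*int q}" "l u" "z = g u" unfolding XQg by blast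
      then have "u = int q" using mid_u z(2) by simp
      then have "z = f (int p)" "l (int p)" using u fg2[of 1] lq[of 1] by auto
      then show ?thesis by blast
    qed
  next
    fix z assume "z \<in> f ` {t\<in>{int p}. l t}"
    then have z: "z = f (int p)" "l (int p)" by auto
    have "int p \<in> {0..2*int p}" using p0 by simp
    then have "z \<in> XP" unfolding XPf using z by blast
    then show "z \<in> {z\<in>X. hmidpoint z}" unfolding X2 using z hmp by blast
  qed
  have cM: "card {z\<in>X. hmidpoint z} = (if l (int p) then 1 else 0)"
    unfolding M card_image[OF injf] card_single_if ..
  have "light_count p q L B = 2*K" using LC cM cI cU cnt by simp
  moreover have "2*K = nat \<bar>h\<bar>" unfolding K_def using hev by (simp add: nat_abs_mult_distrib)
  ultimately show ?thesis unfolding L_def h_def w_def by simp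
qed


lemma light_count_V:
  fixes p q :: nat and X0 Y0 m :: int and B :: "(real \<times> real) set"
  assumes ep: "even_rat_param p q"
    and B: "B = {z. of_int X0 \<le> fst z \<and> fst z \<le> of_int X0 + of_int (int p + int q) \<and>
                   of_int Y0 \<le> snd z \<and> snd z \<le> of_int Y0 + of_int (int p + int q)}"
    and m: "X0 \<le> m" "m \<le> X0 + (int p + int q)"
  shows "light_count p q {z. fst z = of_int m} B = nat \<bar>RR (int p + int q) (4*int p*m)\<bar>"
proof -
  define w where "w = int p + int q"
  note prm = params[OF ep, folded w_def]
  have w0: "w > 0" using prm by simp
  have p0: "int p > 0" using prm by simp
  have q0: "int q > 0" using prm by simp
  have wr: "real_of_int w > 0" using w0 by simp
  define h where "h = RR w (4 * int p * m)"
  define L where "L = {z::real\<times>real. fst z = of_int m}"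
  define X where "X = {z \<in> L \<inter> B. \<exists>s. (hseg s \<or> vseg s) \<and> s \<subseteq> L \<and> light_point p q s z}"
  define XP where "XP = {z. fst z = (of_int m::real) \<and> of_int Y0 \<le> snd z \<and> snd z \<le> of_int Y0 + of_int w \<and>
            (\<exists>c. snd z = - (2*of_int (int p)/of_int w) * fst z + of_int c \<and> LT h (RR w (w + 2*int p*c)))}"
  define XQ where "XQ = {z. fst z = (of_int m::real) \<and> of_int Y0 \<le> snd z \<and> snd z \<le> of_int Y0 + of_int w \<and>
            (\<exists>c. snd z = - (2*of_int (int q)/of_int w) * fst z + of_int c \<and> LT h (RR w (w + 2*int p*c)))}"
  have LC: "light_count p q L B = card X + card {z\<in>X. hmidpoint z}"
    unfolding light_count_def X_def Let_def by simp
  have X1: "X = {z\<in>L\<inter>B. light_wrt p q (F_V p q) z}" unfolding X_def by (rule X_V[OF L_def])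
  have X2: "X = XP \<union> XQ"
  proof (intro set_eqI)
    fix z :: "real \<times> real"
    show "z \<in> X \<longleftrightarrow> z \<in> XP \<union> XQ"
    proof (cases "fst z = of_int m")
      case True
      have FA: "F_V p q z = of_int h / of_int (int p + int q)"
        using FV_val[of p q z m] True w0 unfolding h_def w_def by simp
      have LB: "z \<in> L \<inter> B \<longleftrightarrow> of_int Y0 \<le> snd z \<and> snd z \<le> of_int Y0 + of_int w"
        using True m unfolding L_def B w_def by simp
      show ?thesis unfolding X1 XP_def XQ_def using light_wrt_iff[of p q "F_V p q" z h] FA w0 True LB
        unfolding w_def by auto
    next
      case False
      then show ?thesis unfolding X1 XP_def XQ_def L_def by auto
    qed
  qed
  have nomid: "{z\<in>X. hmidpoint z} = {}"
  proof -
    have "\<not> hmidpoint z" if "z \<in> X" for z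
    proof
      assume "hmidpoint z"
      then obtain M where "fst z = of_int M + 1/2" unfolding hmidpoint_def by auto
      moreover have "fst z = of_int m" using that unfolding X1 L_def by auto
      ultimately have "real_of_int (2*m) = of_int (2*M + 1)" by simp
      then have "2*m = 2*M + 1" by (simp only: of_int_eq_iff)
      then show False by presburger
    qed
    then show ?thesis by blast
  qed
  show ?thesis
  proof (cases "h = 0")
    case True
    have "XP = {}" "XQ = {}" unfolding XP_def XQ_def True LT_def by auto
    then show ?thesis using LC nomid X2 True unfolding L_def h_def w_def by simp
  next
    case False
    have nm: "\<not> w dvd m"
    proof
      assume "w dvd m"
      then obtain r where "m = w*r" by blast
      then have "(2*w) dvd (4 * int p * m - 0)" by (simp add: algebra_simps)
      then have "h = RR w 0" unfolding h_def by (rule RR_cong)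
      also have "\<dots> = 0" using w0 by (intro RR_id) auto
      finally show False using False by simp
    qed
    have c2q: "coprime (2 * int q) w" using prm by simp
    have ndp: "\<not> w dvd (Y0*w + 2*int p*m)"
    proof
      assume "w dvd (Y0*w + 2*int p*m)"
      then have "w dvd (2*int p) * m" by (simp add: dvd_add_right_iff mult.assoc)
      then have "w dvd m" using \<open>coprime (2*int p) w\<close>
        by (metis coprime_commute coprime_dvd_mult_right_iff)
      then show False using nm by simp
    qed
    have ndq: "\<not> w dvd (Y0*w + 2*int q*m)"
    proof
      assume "w dvd (Y0*w + 2*int q*m)"
      then have "w dvd (2*int q) * m" by (simp add: dvd_add_right_iff mult.assoc)
      then have "w dvd m" using c2q
        by (metis coprime_commute coprime_dvd_mult_right_iff)
      then show False using nm by simp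
    qed
    define f where "f c = ((of_int m::real), (of_int c::real) - 2*of_int (int p)*of_int m/of_int w)" for c
    define g where "g c = ((of_int m::real), (of_int c::real) - 2*of_int (int q)*of_int m/of_int w)" for c
    define cp where "cp = (Y0*w + 2*int p*m) div w + 1"
    define cq where "cq = (Y0*w + 2*int q*m) div w + 1"
    have XPf: "XP = f ` {c\<in>{cp..<cp+w}. LT h (RR w (w + 2*int p*c))}"
      unfolding XP_def f_def cp_def by (rule vline_param[OF p0 w0 ndp])
    have XQg: "XQ = g ` {c\<in>{cq..<cq+w}. LT h (RR w (w + 2*int p*c))}"
      unfolding XQ_def g_def cq_def by (rule vline_param[OF q0 w0 ndq])
    have injf: "inj_on f A" for A by (auto simp: inj_on_def f_def)
    have injg: "inj_on g A" for A by (auto simp: inj_on_def g_def)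
    have hb: "-w < h" "h \<le> w" using RR_bounds[OF w0] unfolding h_def by auto
    have hev: "even h"
    proof -
      have "even (h - 4*int p*m)" unfolding h_def by (rule RR_even)
      then show ?thesis by (simp add: even_diff)
    qed
    define K where "K = nat \<bar>h\<bar> div 2"
    have full: "card {t\<in>{c..<c+w}. LT h (RR w (w + 2*int p*t))} = K" for c
    proof -
      have "card {t\<in>{c..<c+w}. LT h (RR w (w + 2*int p*t))} = card {v \<in> Tset w w. LT h v}"
        by (rule period_count[OF w0 \<open>odd w\<close> \<open>coprime (int p) w\<close>])
      also have "\<dots> = K" unfolding LT_def K_def using light_card[OF \<open>odd w\<close> hev] hb by simp
      finally show ?thesis .
    qed
    have disj: "XP \<inter> XQ = {}"
    proof (rule ccontr)
      assume "XP \<inter> XQ \<noteq> {}"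
      then obtain c c' where "f c = g c'" unfolding XPf XQg by blast
      then have "of_int c - 2*real p*of_int m/of_int w = of_int c' - 2*real q*of_int m/of_int w"
        unfolding f_def g_def by simp
      then have "real_of_int c * of_int w - 2*real p*of_int m = of_int c' * of_int w - 2*real q*of_int m"
        using wr by (simp add: field_simps)
      then have "real_of_int (c * w - 2*int p*m) = real_of_int (c' * w - 2*int q*m)" by simp
      then have e: "c * w - 2*int p*m = c' * w - 2*int q*m" by (simp only: of_int_eq_iff)
      have "4*int p*m = w*(c - c' + 2*m)" using e unfolding w_def by (simp add: algebra_simps)
      then have "w dvd (4*int p) * m" by (metis dvd_triv_left mult.assoc)
      then have "w dvd m" using \<open>coprime (4*int p) w\<close>
        by (metis coprime_commute coprime_dvd_mult_right_iff)
      then show False using nm by simp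
    qed
    have "card X = card XP + card XQ" unfolding X2 using disj
      unfolding XPf XQg by (intro card_Un_disjoint finite_imageI fin_ico) auto
    also have "\<dots> = K + K" unfolding XPf XQg card_image[OF injf] card_image[OF injg] full ..
    finally have "light_count p q L B = K + K" using LC nomid by simp
    moreover have "K + K = nat \<bar>h\<bar>"
    proof -
      obtain r where "h = 2*r" using hev by blast
      then show ?thesis unfolding K_def by (simp add: abs_mult nat_mult_distrib)
    qed
    ultimately show ?thesis unfolding L_def h_def w_def by simp
  qed
qed


lemma abs_real_eq: "\<bar>real_of_int r\<bar> = real k \<longleftrightarrow> \<bar>r\<bar> = int k"
proof -
  have "\<bar>real_of_int r\<bar> = real_of_int \<bar>r\<bar>" by simp
  moreover have "real k = real_of_int (int k)" by simp
  ultimately show ?thesis by (simp only: of_int_eq_iff)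
qed

lemma count_lines_int:
  assumes ep: "even_rat_param p q" and k: "even k" "int k \<le> int p + int q"
  shows "card {n\<in>{t*(int p + int q)..t*(int p + int q)+(int p + int q)}. \<bar>RR (int p + int q) (4*int p*n)\<bar> = int k} = 2"
proof -
  define w where "w = int p + int q"
  note prm = params[OF ep, folded w_def]
  have w0: "w > 0" using prm by simp
  define Z0 where "Z0 = t*w"
  define P where "P n = (\<bar>RR w (4*int p*n)\<bar> = int k)" for n
  have kw: "int k < w" using k prm unfolding w_def by (metis even_of_nat le_less)
  have e: "{n\<in>{Z0..Z0+w}. P n} = {n\<in>{Z0..<Z0+w}. P n} \<union> {n\<in>{Z0+w}. P n}" using w0 by auto
  have c1: "card {n\<in>{Z0..<Z0+w}. P n} = (if int k = 0 then 1 else 2)"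
  proof -
    have "{n\<in>{Z0..<Z0+w}. P n} = {n\<in>{Z0..<Z0+w}. \<bar>RR w (0 + 2*(2*int p)*n)\<bar> = int k}"
      unfolding P_def by (simp add: algebra_simps)
    then have "card {n\<in>{Z0..<Z0+w}. P n} = card {v\<in>Tset w 0. \<bar>v\<bar> = int k}"
      using period_count[OF w0 \<open>odd w\<close> \<open>coprime (2*int p) w\<close>, of Z0 "\<lambda>v. \<bar>v\<bar> = int k" 0] by simp
    also have "\<dots> = (if int k = 0 then 1 else 2)"
      by (rule cap_card) (use k kw in auto)
    finally show ?thesis .
  qed
  have "RR w (4*int p*(Z0+w)) = RR w 0"
    by (rule RR_cong) (simp add: Z0_def algebra_simps)
  also have "\<dots> = 0" using w0 by (intro RR_id) auto
  finally have "P (Z0+w) \<longleftrightarrow> int k = 0" unfolding P_def by auto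
  then have c2: "card {n\<in>{Z0+w}. P n} = (if int k = 0 then 1 else 0)" unfolding card_single_if by simp
  have "card {n\<in>{Z0..Z0+w}. P n} = card {n\<in>{Z0..<Z0+w}. P n} + card {n\<in>{Z0+w}. P n}"
    unfolding e by (intro card_Un_disjoint fin_ico) auto
  then show ?thesis using c1 c2 unfolding P_def Z0_def w_def by (auto split: if_splits)
qed


lemma Hset:
  fixes p q :: nat and X0 Y0 :: int and B :: "(real \<times> real) set"
  assumes w0: "int p + int q > 0"
    and B: "B = {z. of_int X0 \<le> fst z \<and> fst z \<le> of_int X0 + of_int (int p + int q) \<and>
                   of_int Y0 \<le> snd z \<and> snd z \<le> of_int Y0 + of_int (int p + int q)}"
  shows "{L\<in>Hlines. capacity p q L = real k \<and> L \<inter> B \<noteq> {}}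
       = (\<lambda>n. {z::real\<times>real. snd z = of_int n}) ` {n\<in>{Y0..Y0+(int p + int q)}. \<bar>RR (int p + int q) (4*int p*n)\<bar> = int k}"
proof (intro set_eqI iffI)
  fix L assume "L \<in> {L\<in>Hlines. capacity p q L = real k \<and> L \<inter> B \<noteq> {}}"
  then obtain n where L: "L = {z. snd z = of_int n}" and c: "capacity p q L = real k" and nb: "L \<inter> B \<noteq> {}"
    by (auto simp: Hlines_iff)
  have "\<bar>RR (int p + int q) (4*int p*n)\<bar> = int k" using c cap_H[OF w0, of n] L abs_real_eq by simp
  moreover obtain z where "z \<in> L \<inter> B" using nb by blast
  then have "real_of_int Y0 \<le> of_int n \<and> real_of_int n \<le> of_int (Y0 + (int p + int q))" using L B by auto
  then have "Y0 \<le> n \<and> n \<le> Y0 + (int p + int q)" by (simp only: of_int_le_iff)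
  ultimately show "L \<in> (\<lambda>n. {z::real\<times>real. snd z = of_int n}) ` {n\<in>{Y0..Y0+(int p + int q)}. \<bar>RR (int p + int q) (4*int p*n)\<bar> = int k}"
    using L by auto
next
  fix L assume "L \<in> (\<lambda>n. {z::real\<times>real. snd z = of_int n}) ` {n\<in>{Y0..Y0+(int p + int q)}. \<bar>RR (int p + int q) (4*int p*n)\<bar> = int k}"
  then obtain n where L: "L = {z. snd z = of_int n}" and n: "Y0 \<le> n" "n \<le> Y0+(int p + int q)"
    and r: "\<bar>RR (int p + int q) (4*int p*n)\<bar> = int k" by auto
  have "L \<in> Hlines" using L by (auto simp: Hlines_iff)
  moreover have "capacity p q L = real k" using cap_H[OF w0, of n] L r abs_real_eq by simp
  moreover have "(of_int X0, of_int n) \<in> L \<inter> B"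
  proof -
    have "real_of_int Y0 \<le> of_int n" "real_of_int n \<le> of_int (Y0 + (int p + int q))" using n by (simp_all only: of_int_le_iff)
    then show ?thesis using L B w0 by simp
  qed
  ultimately show "L \<in> {L\<in>Hlines. capacity p q L = real k \<and> L \<inter> B \<noteq> {}}" by blast
qed

lemma Vset:
  fixes p q :: nat and X0 Y0 :: int and B :: "(real \<times> real) set"
  assumes w0: "int p + int q > 0"
    and B: "B = {z. of_int X0 \<le> fst z \<and> fst z \<le> of_int X0 + of_int (int p + int q) \<and>
                   of_int Y0 \<le> snd z \<and> snd z \<le> of_int Y0 + of_int (int p + int q)}"
  shows "{L\<in>Vlines. capacity p q L = real k \<and> L \<inter> B \<noteq> {}}
       = (\<lambda>n. {z::real\<times>real. fst z = of_int n}) ` {n\<in>{X0..X0+(int p + int q)}. \<bar>RR (int p + int q) (4*int p*n)\<bar> = int k}"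
proof (intro set_eqI iffI)
  fix L assume "L \<in> {L\<in>Vlines. capacity p q L = real k \<and> L \<inter> B \<noteq> {}}"
  then obtain n where L: "L = {z. fst z = of_int n}" and c: "capacity p q L = real k" and nb: "L \<inter> B \<noteq> {}"
    by (auto simp: Vlines_iff)
  have "\<bar>RR (int p + int q) (4*int p*n)\<bar> = int k" using c cap_V[OF w0, of n] L abs_real_eq by simp
  moreover obtain z where "z \<in> L \<inter> B" using nb by blast
  then have "real_of_int X0 \<le> of_int n \<and> real_of_int n \<le> of_int (X0 + (int p + int q))" using L B by auto
  then have "X0 \<le> n \<and> n \<le> X0 + (int p + int q)" by (simp only: of_int_le_iff)
  ultimately show "L \<in> (\<lambda>n. {z::real\<times>real. fst z = of_int n}) ` {n\<in>{X0..X0+(int p + int q)}. \<bar>RR (int p + int q) (4*int p*n)\<bar> = int k}"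
    using L by auto
next
  fix L assume "L \<in> (\<lambda>n. {z::real\<times>real. fst z = of_int n}) ` {n\<in>{X0..X0+(int p + int q)}. \<bar>RR (int p + int q) (4*int p*n)\<bar> = int k}"
  then obtain n where L: "L = {z. fst z = of_int n}" and n: "X0 \<le> n" "n \<le> X0+(int p + int q)"
    and r: "\<bar>RR (int p + int q) (4*int p*n)\<bar> = int k" by auto
  have "L \<in> Vlines" using L by (auto simp: Vlines_iff)
  moreover have "capacity p q L = real k" using cap_V[OF w0, of n] L r abs_real_eq by simp
  moreover have "(of_int n, of_int Y0) \<in> L \<inter> B"
  proof -
    have "real_of_int X0 \<le> of_int n" "real_of_int n \<le> of_int (X0 + (int p + int q))" using n by (simp_all only: of_int_le_iff)
    then show ?thesis using L B w0 by simp
  qed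
  ultimately show "L \<in> {L\<in>Vlines. capacity p q L = real k \<and> L \<inter> B \<noteq> {}}" by blast
qed

theorem theorem2p5:
  fixes p q k :: nat and B :: "(real \<times> real) set"
  assumes "even_rat_param p q"
    and "B \<in> blocks p q"
    and "even k" and "k \<le> omega p q"
  shows "card {L \<in> Hlines. capacity p q L = real k \<and> L \<inter> B \<noteq> {}} = 2
       \<and> card {L \<in> Vlines. capacity p q L = real k \<and> L \<inter> B \<noteq> {}} = 2
       \<and> (\<forall>L \<in> Hlines \<union> Vlines. capacity p q L = real k \<and> L \<inter> B \<noteq> {}
              \<longrightarrow> light_count p q L B = k)"
proof -
  note ep = assms(1)
  note prm = params[OF ep]
  have w0: "int p + int q > 0" using prm by simp
  have kw: "int k \<le> int p + int q" using assms(4) by (simp add: omega_def)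
  obtain i j :: int where B:
    "B = {z. of_int (i * (int p + int q)^2) \<le> fst z \<and> fst z \<le> of_int (i * (int p + int q)^2) + of_int (int p + int q) \<and>
             of_int (j * (int p + int q)) \<le> snd z \<and> snd z \<le> of_int (j * (int p + int q)) + of_int (int p + int q)}"
    using block_form[OF assms(2)] by blast
  have injH: "inj_on (\<lambda>n. {z::real\<times>real. snd z = of_int n}) A" for A
  proof (rule inj_onI)
    fix x y assume "{z::real\<times>real. snd z = of_int x} = {z. snd z = of_int y}"
    then have "((0::real), (of_int x::real)) \<in> {z::real\<times>real. snd z = of_int y}" by (metis (mono_tags) mem_Collect_eq snd_conv)
    then show "x = y" by simp
  qed
  have injV: "inj_on (\<lambda>n. {z::real\<times>real. fst z = of_int n}) A" for A
  proof (rule inj_onI)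
    fix x y assume "{z::real\<times>real. fst z = of_int x} = {z. fst z = of_int y}"
    then have "((of_int x::real), (0::real)) \<in> {z::real\<times>real. fst z = of_int y}" by (metis (mono_tags) mem_Collect_eq fst_conv)
    then show "x = y" by simp
  qed
  have c1: "card {L \<in> Hlines. capacity p q L = real k \<and> L \<inter> B \<noteq> {}} = 2"
    unfolding Hset[OF w0 B] card_image[OF injH]
    using count_lines_int[OF ep assms(3) kw, of j] by (simp add: algebra_simps)
  have eq: "i * (int p + int q)^2 = (i * (int p + int q)) * (int p + int q)" by (simp add: power2_eq_square)
  have c2: "card {L \<in> Vlines. capacity p q L = real k \<and> L \<inter> B \<noteq> {}} = 2"
    unfolding Vset[OF w0 B] card_image[OF injV]
    using count_lines_int[OF ep assms(3) kw, of "i * (int p + int q)"] by (simp only: eq)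
  have c3: "light_count p q L B = k"
    if L: "L \<in> Hlines \<union> Vlines" and c: "capacity p q L = real k" and nb: "L \<inter> B \<noteq> {}" for L
  proof (cases "L \<in> Hlines")
    case True
    then obtain n where Ln: "L = {z. snd z = of_int n}" by (auto simp: Hlines_iff)
    have r: "\<bar>RR (int p + int q) (4*int p*n)\<bar> = int k" using c cap_H[OF w0, of n] Ln abs_real_eq by simp
    obtain z where "z \<in> L \<inter> B" using nb by blast
    then have "real_of_int (j * (int p + int q)) \<le> of_int n \<and> real_of_int n \<le> of_int (j * (int p + int q) + (int p + int q))"
      using Ln B by auto
    then have "j * (int p + int q) \<le> n \<and> n \<le> j * (int p + int q) + (int p + int q)" by (simp only: of_int_le_iff)
    then have "light_count p q L B = nat \<bar>RR (int p + int q) (4*int p*n)\<bar>"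
      unfolding Ln by (intro light_count_H[OF ep B, of i]) auto
    then show ?thesis using r by simp
  next
    case False
    then have "L \<in> Vlines" using L by blast
    then obtain n where Ln: "L = {z. fst z = of_int n}" by (auto simp: Vlines_iff)
    have r: "\<bar>RR (int p + int q) (4*int p*n)\<bar> = int k" using c cap_V[OF w0, of n] Ln abs_real_eq by simp
    obtain z where "z \<in> L \<inter> B" using nb by blast
    then have "real_of_int (i * (int p + int q)^2) \<le> of_int n \<and> real_of_int n \<le> of_int (i * (int p + int q)^2 + (int p + int q))"
      using Ln B by auto
    then have "i * (int p + int q)^2 \<le> n \<and> n \<le> i * (int p + int q)^2 + (int p + int q)" by (simp only: of_int_le_iff)
    then have "light_count p q L B = nat \<bar>RR (int p + int q) (4*int p*n)\<bar>"
      unfolding Ln by (intro light_count_V[OF ep B]) auto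
    then show ?thesis using r by simp
  qed
  show ?thesis using c1 c2 c3 by blast
qed

end
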